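(* For any positive increasing function $\phi$ with $\phi(X)\to\infty$ as $X\to\infty$, there exists a set $A\subset\mathbb{N}$ such that the set $A^2+A$ has density $1$ and $$\liminf_{X\to\infty} \frac{A(X)}{(X\phi(X))^{1/3}}<\infty.$$
   Context: $\mathbb{N}$ is the set of positive integers. $A^2=\{ab: a,b\in A\}$, $A^2+A=\{x+y: x\in A^2, y\in A\}$. For a set $S$ of nonnegative integers, $S(X)=|S\cap[1,X]|$; $S$ has density $1$ if $\lim_{X\to\infty} S(X)/X = 1$. *)

theory Defs
  imports "HOL-Analysis.Analysis"
begin

definition prodset :: "nat set \<Rightarrow> nat set" where
  "prodset A = {a * b | a b. a \<in> A \<and> b \<in> A}"

definition prodsumset :: "nat set \<Rightarrow> nat set" where
  "prodsumset A = {x + y | x y. x \<in> prodset A \<and> y \<in> A}"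

definition count_upto :: "nat set \<Rightarrow> real \<Rightarrow> nat" where
  "count_upto S X = card {s \<in> S. 1 \<le> s \<and> real s \<le> X}"

definition has_density_one :: "nat set \<Rightarrow> bool" where
  "has_density_one S \<longleftrightarrow> ((\<lambda>X. real (count_upto S X) / X) \<longlongrightarrow> 1) at_top"

end

theory Submission
  imports Defs "HOL-Real_Asymp.Real_Asymp"
begin


lemma psum_intro:
  assumes "a \<in> A" "b \<in> A" "c \<in> A" "x = a*b + c"
  shows "x \<in> prodsumset A"
  using assms unfolding prodsumset_def prodset_def by blast

lemma block_cover:
  fixes Q x :: nat
  assumes Q: "Q \<ge> 1" and s1: "{Q..9*Q} \<subseteq> A" and s2: "{Q^2..Q^2+9*Q} \<subseteq> A"
    and x1: "Q^3 + Q^2 \<le> x" and x2: "x \<le> 9*Q^3 + Q^2"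
  shows "x \<in> prodsumset A"
proof -
  define y where "y = x - Q^2"
  have y1: "Q*Q^2 \<le> y" and y2: "y \<le> (9*Q)*Q^2" using x1 x2 unfolding y_def
    by (auto simp: power3_eq_cube power2_eq_square)
  have Q2: "Q^2 > 0" using Q by simp
  define a where "a = y div Q^2"
  have a1: "Q \<le> a" unfolding a_def using div_le_mono[OF y1, of "Q^2"] Q2 by simp
  have a2: "a \<le> 9*Q" unfolding a_def using div_le_mono[OF y2, of "Q^2"] Q2 by simp
  have apos: "a > 0" using a1 Q by simp
  have ay: "a*Q^2 \<le> y" unfolding a_def by (simp add: div_times_less_eq_dividend)
  have ay2: "y < a*Q^2 + Q^2" unfolding a_def
    by (metis Q2 add.commute div_mult_mod_eq mod_less_divisor nat_add_left_cancel_less)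
  define b where "b = y div a"
  define r where "r = y mod a"
  have b1: "Q^2 \<le> b" unfolding b_def using div_le_mono[OF ay, of a] apos by simp
  have "b*a \<le> y" unfolding b_def by (simp add: div_times_less_eq_dividend)
  moreover have "Q^2 \<le> a*Q" using a1 by (simp add: power2_eq_square)
  ultimately have "b*a < (Q^2+Q)*a" using ay2 by (simp add: algebra_simps)
  hence b2: "b < Q^2 + Q" by simp
  have r1: "r < a" unfolding r_def using apos by simp
  have yeq: "y = a*b + r" unfolding b_def r_def by simp
  have xeq: "x = a*b + (Q^2 + r)" using yeq x1 unfolding y_def by simp
  show ?thesis
    apply (rule psum_intro[OF _ _ _ xeq])
    using s1 s2 a1 a2 b1 b2 r1 by auto
qed

definition Jp :: "nat set" where
  "Jp = {j. \<exists>k::nat. 16^(k+1) < j \<and> j \<le> 3*16^(k+1)}"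
definition blk :: "nat \<Rightarrow> nat set" where
  "blk j = {2^j..9*2^j} \<union> {4^j..4^j+9*2^j}"
definition itv :: "nat \<Rightarrow> nat set" where
  "itv j = {8^j+1..16*8^j}"
definition Aset :: "nat set" where
  "Aset = {1} \<union> (\<Union>j\<in>-Jp. blk j) \<union> (\<Union>j\<in>Jp. itv j)"

lemma e8: "(8::nat)^j = 2^(3*j)" by (simp add: power_mult)
lemma e4: "(4::nat)^j = 2^(2*j)" by (simp add: power_mult)
lemma e3: "((2::nat)^j)^3 = 8^j" "((2::nat)^j)^2 = 4^j"
proof -
  have "((2::nat)^j)^3 = 2^(j*3)" by (rule power_mult[symmetric])
  also have "\<dots> = 2^(3*j)" by (simp only: mult.commute)
  finally show "((2::nat)^j)^3 = 8^j" unfolding e8 .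
  have "((2::nat)^j)^2 = 2^(j*2)" by (rule power_mult[symmetric])
  also have "\<dots> = 2^(2*j)" by (simp only: mult.commute)
  finally show "((2::nat)^j)^2 = 4^j" unfolding e4 .
qed

lemma level_cover:
  assumes "j \<ge> 1" "8^j + 4^j \<le> x" "x \<le> 9*8^j"
  shows "x \<in> prodsumset Aset"
proof (cases "j \<in> Jp")
  case True
  have "itv j \<subseteq> Aset" using True unfolding Aset_def by blast
  moreover have "1 \<in> Aset" unfolding Aset_def by blast
  moreover have "(4::nat)^j \<ge> 4^1" using assms(1) by (rule power_increasing) simp
  hence "(4::nat)^j \<ge> 2" by simp
  hence "x - 1 \<in> {8^j+1..16*8^j}" using assms(2,3) by (simp only: atLeastAtMost_iff) linarith
  hence "x - 1 \<in> itv j" unfolding itv_def .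
  moreover have "x \<ge> 1" using assms(2) \<open>(4::nat)^j \<ge> 2\<close> by linarith
  hence "x = 1*1 + (x-1)" by simp
  ultimately show ?thesis by (intro psum_intro[of 1 _ 1 "x-1"]) blast+
next
  case False
  have sub: "blk j \<subseteq> Aset" using False unfolding Aset_def by blast
  show ?thesis
  proof (rule block_cover[of "2^j"])
    show "{2 ^ j..9 * 2 ^ j} \<subseteq> Aset" "{(2 ^ j)\<^sup>2..(2 ^ j)\<^sup>2 + 9 * 2 ^ j} \<subseteq> Aset"
      using sub unfolding blk_def e3 by blast+
    show "(2::nat) ^ j \<ge> 1" by simp
    show "(2 ^ j) ^ 3 + (2 ^ j)\<^sup>2 \<le> x" "x \<le> 9 * (2 ^ j) ^ 3 + (2 ^ j)\<^sup>2"
      unfolding e3 using assms by linarith+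
  qed
qed

lemma pow_aux: "m \<ge> 2 \<Longrightarrow> 4 * 4^m \<le> (8::nat)^m"
proof -
  assume m: "m \<ge> 2"
  have "(4::nat) \<le> 2^m" using power_increasing[of 2 m "2::nat"] m by simp
  hence "4 * 4^m \<le> 2^m * (4::nat)^m" by simp
  also have "\<dots> = 8^m" by (simp add: power_mult_distrib[symmetric])
  finally show ?thesis .
qed

lemma cover_all_aux: "8^3 \<le> x \<Longrightarrow> x < 8^n \<Longrightarrow> x \<in> prodsumset Aset"
proof (induction n arbitrary: x)
  case 0
  then show ?case by simp
next
  case (Suc n)
  show ?case
  proof (cases "x < 8^n")
    case True
    then show ?thesis using Suc by blast
  next
    case False
    have n3: "n \<ge> 3"
    proof (rule ccontr)
      assume "\<not> n \<ge> 3"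
      hence "Suc n \<le> 3" by simp
      hence "(8::nat)^Suc n \<le> 8^3" by (rule power_increasing) simp
      thus False using Suc.prems by simp
    qed
    show ?thesis
    proof (cases "8^n + 4^n \<le> x")
      case True
      then show ?thesis using n3 Suc.prems by (intro level_cover[of n]) auto
    next
      case c2: False
      obtain m where nm: "n = Suc m" using n3 by (cases n) auto
      have m2: "m \<ge> 2" using n3 nm by simp
      have "4 * 4^m \<le> (8::nat)^m" using pow_aux[OF m2] .
      then show ?thesis using False c2 nm m2 by (intro level_cover[of m]) auto
    qed
  qed
qed

lemma cover_all: "8^3 \<le> x \<Longrightarrow> x \<in> prodsumset Aset"
proof -
  assume "8^3 \<le> x"
  have "x < 2^x" by (rule less_exp)
  moreover have "(2::nat)^x \<le> 8^x" by (rule power_mono) simp_all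
  ultimately have "x < 8^x" by linarith
  with \<open>8^3 \<le> x\<close> show ?thesis by (rule cover_all_aux)
qed

lemma sum_aux: "(\<Sum>j\<le>m. 9*2^j + 1) \<le> (20::nat) * 2^m"
proof (induction m)
  case 0 then show ?case by simp
next
  case (Suc m)
  have "(\<Sum>j\<le>Suc m. 9*2^j + 1) = (\<Sum>j\<le>m. 9*2^j + 1) + (9*2^(Suc m) + (1::nat))" by simp
  moreover have "2^(Suc m) = 2*(2::nat)^m" by simp
  moreover have "(1::nat) \<le> 2^m" by simp
  ultimately show ?case using Suc.IH by linarith
qed


lemma count_good:
  assumes m: "m = 16^(k+1)"
  shows "count_upto Aset (real (8^m)) \<le> 29 * 2^m"
proof -
  let ?T = "{s \<in> Aset. 1 \<le> s \<and> real s \<le> real (8^m)}"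
  let ?U = "{1..9*2^m::nat} \<union> (\<Union>j\<in>{..m}. {4^j..4^j+9*2^j})"
  have sub: "?T \<subseteq> ?U"
  proof
    fix s assume sT: "s \<in> ?T"
    hence sA: "s \<in> Aset" and s1: "1 \<le> s" and sm: "s \<le> 8^m" by auto
    from sA consider "s = 1" | j where "j \<notin> Jp" "s \<in> blk j" | j where "j \<in> Jp" "s \<in> itv j"
      unfolding Aset_def by blast
    then show "s \<in> ?U"
    proof cases
      case 1 then show ?thesis by simp
    next
      case (2 j)
      show ?thesis
      proof (cases "j \<le> m")
        case True
        have "(2::nat)^j \<le> 2^m" using True by (rule power_increasing) simp
        hence le: "9*2^j \<le> 9*(2::nat)^m" by simp
        have "s \<in> {2^j..9*2^j} \<or> s \<in> {4^j..4^j+9*2^j}" using 2(2) unfolding blk_def by blast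
        then show ?thesis
        proof
          assume "s \<in> {2^j..9*2^j}"
          hence "s \<le> 9*2^j" by simp
          hence "s \<le> 9*2^m" using le by linarith
          thus ?thesis using s1 by simp
        next
          assume "s \<in> {4^j..4^j+9*2^j}"
          thus ?thesis using True by blast
        qed
      next
        case False
        have "\<not> j \<le> 3*m" using 2(1) False m unfolding Jp_def by auto
        hence "3*m < j" by simp
        hence "(2::nat)^(3*m) < 2^j" by (rule power_strict_increasing) simp
        moreover have "2^j \<le> s"
        proof -
          have "(2::nat)^j \<le> 4^j" by (rule power_mono) simp_all
          thus ?thesis using 2(2) unfolding blk_def by auto
        qed
        moreover have "s \<le> 2^(3*m)" using sm unfolding e8 .
        ultimately have False by linarith
        thus ?thesis ..
      qed
    next
      case (3 j)
      obtain i where i1: "16^(i+1) < j" and i2: "j \<le> 3*16^(i+1)" using 3(1) unfolding Jp_def by auto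
      have "8^j < s" using 3(2) unfolding itv_def by auto
      hence "(8::nat)^j < 8^m" using sm by linarith
      hence "j < m" using power_less_imp_less_exp by fastforce
      hence "(16::nat)^(i+1) < 16^(k+1)" using i1 m by linarith
      hence "i + 1 < k + 1" using power_less_imp_less_exp by fastforce
      hence "(16::nat)^(i+1) \<le> 16^k" by (intro power_increasing) auto
      moreover have "(1::nat) \<le> 16^k" by simp
      moreover have "(16::nat)^(k+1) = 16*16^k" by simp
      ultimately have jle: "3*j+4 \<le> m" using i2 m by linarith
      have "s \<le> 16 * 8^j" using 3(2) unfolding itv_def by auto
      also have "\<dots> = 2^(3*j+4)" unfolding e8 by (simp add: power_add)
      also have "\<dots> \<le> 2^m" using jle by (rule power_increasing) simp
      finally show ?thesis using s1 by simp
    qed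
  qed
  have "card ?T \<le> card ?U" by (rule card_mono[OF _ sub]) simp
  also have "\<dots> \<le> card {1..9*2^m::nat} + card (\<Union>j\<in>{..m}. {4^j..4^j+9*2^j::nat})" by (rule card_Un_le)
  also have "card (\<Union>j\<in>{..m}. {4^j..4^j+9*2^j::nat}) \<le> (\<Sum>j\<le>m. card {(4::nat)^j..4^j+9*2^j})"
    by (rule card_UN_le) simp
  also have "(\<Sum>j\<le>m. card {(4::nat)^j..4^j+9*2^j}) = (\<Sum>j\<le>m. 9*2^j + 1)" by simp
  also have "\<dots> \<le> 20 * 2^m" by (rule sum_aux)
  finally have "card ?T \<le> 29 * 2^m" by simp
  then show ?thesis unfolding count_upto_def .
qed



lemma density_from_cofinite:
  assumes n0: "n0 \<ge> 1" and S: "\<And>n. n \<ge> n0 \<Longrightarrow> n \<in> S"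
  shows "has_density_one S"
proof -
  have bounds: "(X - real n0) / X \<le> real (count_upto S X) / X \<and> real (count_upto S X) / X \<le> 1"
    if X: "X \<ge> real n0" for X :: real
  proof -
    have Xp: "X > 0" using X n0 by linarith
    let ?T = "{s \<in> S. 1 \<le> s \<and> real s \<le> X}"
    have sub1: "{n0..nat \<lfloor>X\<rfloor>} \<subseteq> ?T" using S n0 by auto (linarith)
    have sub2: "?T \<subseteq> {1..nat \<lfloor>X\<rfloor>}" by auto (linarith)
    have "card {n0..nat \<lfloor>X\<rfloor>} \<le> card ?T" by (rule card_mono[OF _ sub1]) (rule finite_subset[OF sub2], simp)
    moreover have "card ?T \<le> card {1..nat \<lfloor>X\<rfloor>}" by (rule card_mono[OF _ sub2]) simp
    ultimately have c1: "real (nat \<lfloor>X\<rfloor> + 1 - n0) \<le> real (card ?T)" and c2: "real (card ?T) \<le> real (nat \<lfloor>X\<rfloor>)"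
      by simp_all
    have "X - real n0 \<le> real (nat \<lfloor>X\<rfloor> + 1 - n0)" using X by linarith
    hence "X - real n0 \<le> real (count_upto S X)" using c1 unfolding count_upto_def by linarith
    moreover have "real (count_upto S X) \<le> X" using c2 X unfolding count_upto_def by linarith
    ultimately show ?thesis using Xp by (simp add: divide_right_mono)
  qed
  have l1: "((\<lambda>X::real. (X - real n0) / X) \<longlongrightarrow> 1) at_top" by real_asymp
  show ?thesis unfolding has_density_one_def
  proof (rule tendsto_sandwich[OF _ _ l1 tendsto_const])
    show "\<forall>\<^sub>F X in at_top. (X - real n0) / X \<le> real (count_upto S X) / X"
      using eventually_ge_at_top[of "real n0"] by (rule eventually_mono) (use bounds in blast)
    show "\<forall>\<^sub>F X in at_top. real (count_upto S X) / X \<le> 1"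
      using eventually_ge_at_top[of "real n0"] by (rule eventually_mono) (use bounds in blast)
  qed
qed


lemma ratio_good:
  fixes \<phi> :: "real \<Rightarrow> real"
  assumes pos: "\<forall>X\<ge>1. \<phi> X > 0" and mono: "mono_on {1..} \<phi>"
  shows "real (count_upto Aset (real (8^(16^(k+1))))) /
           (real (8^(16^(k+1))) * \<phi> (real (8^(16^(k+1))))) powr (1/3) \<le> 29 / \<phi> 1 powr (1/3)"
proof -
  define m :: nat where "m = 16^(k+1)"
  define X :: real where "X = real (8^m)"
  define y :: real where "y = 2^m"
  have ypos: "y > 0" unfolding y_def by simp
  have "y powr 3 = y powr (real 3)" by simp
  also have "\<dots> = y^3" using ypos by (rule powr_realpow)
  also have "\<dots> = real (((2::nat)^m)^3)" unfolding y_def by simp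
  also have "\<dots> = X" unfolding X_def e3 ..
  finally have Xy: "X = y powr 3" ..
  have X1: "X \<ge> 1" unfolding X_def by simp
  have p1: "\<phi> 1 > 0" using pos by simp
  have pX: "\<phi> 1 \<le> \<phi> X" using mono X1 unfolding mono_on_def by simp
  have pXpos: "\<phi> X > 0" using p1 pX by linarith
  have "(X * \<phi> X) powr (1/3) = X powr (1/3) * \<phi> X powr (1/3)"
    using X1 pXpos by (simp add: powr_mult)
  also have "X powr (1/3) = y"
  proof -
    have "X powr (1/3) = y powr (3 * (1/3))" unfolding Xy by (rule powr_powr)
    also have "\<dots> = y" using ypos by simp
    finally show ?thesis .
  qed
  finally have den: "(X * \<phi> X) powr (1/3) = y * \<phi> X powr (1/3)" .
  have cnt: "real (count_upto Aset X) \<le> 29 * y"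
  proof -
    have "real (count_upto Aset X) \<le> real (29 * 2^m)"
      using count_good[OF m_def] unfolding X_def by (simp only: of_nat_le_iff)
    thus ?thesis unfolding y_def by simp
  qed
  have q1: "\<phi> 1 powr (1/3) > 0" using p1 by simp
  have q2: "\<phi> 1 powr (1/3) \<le> \<phi> X powr (1/3)" using p1 pX by (intro powr_mono2) auto
  have "real (count_upto Aset X) / (X * \<phi> X) powr (1/3) \<le> 29 * y / (y * \<phi> X powr (1/3))"
    unfolding den using cnt ypos q1 q2 by (intro divide_right_mono) auto
  also have "\<dots> = 29 / \<phi> X powr (1/3)" using ypos by simp
  also have "\<dots> \<le> 29 / \<phi> 1 powr (1/3)"
    using q1 q2 by (intro divide_left_mono mult_pos_pos) auto
  finally show ?thesis unfolding X_def m_def .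
qed

theorem theorem1p3:
  fixes \<phi> :: "real \<Rightarrow> real"
  assumes "\<forall>X\<ge>1. \<phi> X > 0"
    and "mono_on {1..} \<phi>"
    and "filterlim \<phi> at_top at_top"
  shows "\<exists>A::nat set. 0 \<notin> A \<and> has_density_one (prodsumset A) \<and>
           Liminf at_top (\<lambda>X. ereal (real (count_upto A X) / (X * \<phi> X) powr (1/3))) < \<infinity>"
proof (intro exI conjI)
  show "0 \<notin> Aset" unfolding Aset_def blk_def itv_def by auto
  show "has_density_one (prodsumset Aset)"
    by (rule density_from_cofinite[of "8^3"]) (auto intro: cover_all)
  define B where "B = 29 / \<phi> 1 powr (1/3)"
  define f where "f = (\<lambda>X. ereal (real (count_upto Aset X) / (X * \<phi> X) powr (1/3)))"
  have "Liminf at_top f \<le> ereal B"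
    unfolding Liminf_def
  proof (rule SUP_least)
    fix P assume "P \<in> {P. eventually P (at_top::real filter)}"
    then obtain N where N: "\<And>x. x \<ge> N \<Longrightarrow> P x" by (auto simp: eventually_at_top_linorder)
    define k where "k = nat \<lceil>N\<rceil>"
    define Xk :: real where "Xk = real (8^(16^(k+1)))"
    have "k < 2^k" by (rule less_exp)
    moreover have "(2::nat)^k \<le> 16^k" by (rule power_mono) simp_all
    moreover have "(16::nat)^k \<le> 16^(k+1)" by (rule power_increasing) simp_all
    ultimately have "k < 16^(k+1)" by linarith
    moreover have "16^(k+1) < (2::nat)^(16^(k+1))" by (rule less_exp)
    moreover have "(2::nat)^(16^(k+1)) \<le> 8^(16^(k+1))" by (rule power_mono) simp_all
    ultimately have "k < (8::nat)^(16^(k+1))" by linarith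
    hence "real k \<le> Xk" unfolding Xk_def by linarith
    hence "N \<le> Xk" unfolding k_def by linarith
    hence "P Xk" by (rule N)
    hence "(INF x\<in>Collect P. f x) \<le> f Xk" by (intro INF_lower) simp
    also have "f Xk \<le> ereal B" unfolding f_def Xk_def B_def
      using ratio_good[OF assms(1,2), of k] by simp
    finally show "(INF x\<in>Collect P. f x) \<le> ereal B" .
  qed
  also have "ereal B < \<infinity>" by simp
  finally show "Liminf at_top (\<lambda>X. ereal (real (count_upto Aset X) / (X * \<phi> X) powr (1/3))) < \<infinity>"
    unfolding f_def .
qed

end
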